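(* There exist boomerang subgroups $\Delta < F_d$ of the free group $F_d$ of rank $d$ such that the only invariant random subgroup of $F_d$ supported on the closure (in $\mathrm{Sub}(F_d)$) of the conjugacy class $\{g\Delta g^{-1} \mid g \in F_d\}$ is the Dirac measure at the trivial subgroup.
   Context: For a countable group $G$, $\mathrm{Sub}(G)$ is the set of subgroups of $G$ with the topology induced from the product topology via $\mathrm{Sub}(G) \subset \{0,1\}^G$ (the Chabauty space); it is compact and $G$ acts on it continuously by conjugation. A subgroup $\Delta \leq G$ is a boomerang subgroup if for every $g \in G$ there is a sequence $n_k \to \infty$ with $\lim_{k\to\infty} g^{n_k}\Delta g^{-n_k} = \Delta$. An invariant random subgroup of $G$ is a conjugation-invariant Borel probability measure on $\mathrm{Sub}(G)$. *)

theory Defs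
  imports "HOL-Analysis.Analysis" "HOL-Probability.Probability" "HOL-Algebra.Algebra"
begin

text \<open>A letter (i, True) is the generator x_i, (i, False) its inverse.\<close>
type_synonym letter = "nat \<times> bool"

definition inverse_letters :: "letter \<Rightarrow> letter \<Rightarrow> bool" where
  "inverse_letters x y \<longleftrightarrow> fst x = fst y \<and> snd x \<noteq> snd y"

definition reduced :: "letter list \<Rightarrow> bool" where
  "reduced w \<longleftrightarrow> (\<forall>i. Suc i < length w \<longrightarrow> \<not> inverse_letters (w ! i) (w ! Suc i))"

definition reduce :: "letter list \<Rightarrow> letter list" where
  "reduce w = foldr (\<lambda>x acc. case acc of [] \<Rightarrow> [x]
                         | y # ys \<Rightarrow> (if inverse_letters x y then ys else x # acc)) w []"

definition free_group :: "nat \<Rightarrow> letter list monoid" where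
  "free_group d = \<lparr> carrier = {w. reduced w \<and> (\<forall>x \<in> set w. fst x < d)},
                     mult = (\<lambda>w v. reduce (w @ v)),
                     one = [] \<rparr>"

definition Sub :: "('a, 'm) monoid_scheme \<Rightarrow> 'a set set" where
  "Sub G = {H. subgroup H G}"

text \<open>Subspace topology on Sub(G) induced from the product topology on {0,1}^G:
  generated by the subbasic cylinder sets {H. g \<in> H} and {H. g \<notin> H}, g \<in> G.\<close>
definition chabauty :: "('a, 'm) monoid_scheme \<Rightarrow> 'a set topology" where
  "chabauty G = subtopology
     (topology_generated_by ({{H. g \<in> H} | g. g \<in> carrier G} \<union> {{H. g \<notin> H} | g. g \<in> carrier G}))
     (Sub G)"

definition chabauty_borel :: "('a, 'm) monoid_scheme \<Rightarrow> 'a set measure" where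
  "chabauty_borel G = sigma (Sub G) {U. openin (chabauty G) U}"

definition conj_sub :: "('a, 'm) monoid_scheme \<Rightarrow> 'a \<Rightarrow> 'a set \<Rightarrow> 'a set" where
  "conj_sub G g H = {g \<otimes>\<^bsub>G\<^esub> h \<otimes>\<^bsub>G\<^esub> inv\<^bsub>G\<^esub> g | h. h \<in> H}"

definition boomerang :: "('a, 'm) monoid_scheme \<Rightarrow> 'a set \<Rightarrow> bool" where
  "boomerang G \<Delta> \<longleftrightarrow> subgroup \<Delta> G \<and>
     (\<forall>g \<in> carrier G. \<exists>n :: nat \<Rightarrow> nat. filterlim n at_top sequentially \<and>
        limitin (chabauty G) (\<lambda>k. conj_sub G (g [^]\<^bsub>G\<^esub> n k) \<Delta>) \<Delta> sequentially)"

definition IRS :: "('a, 'm) monoid_scheme \<Rightarrow> 'a set measure \<Rightarrow> bool" where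
  "IRS G M \<longleftrightarrow> prob_space M \<and> sets M = sets (chabauty_borel G) \<and>
     (\<forall>g \<in> carrier G. distr M M (conj_sub G g) = M)"

definition conj_class :: "('a, 'm) monoid_scheme \<Rightarrow> 'a set \<Rightarrow> 'a set set" where
  "conj_class G \<Delta> = {conj_sub G g \<Delta> | g. g \<in> carrier G}"

end

theory Submission
  imports Defs
begin

definition flipl :: "letter \<Rightarrow> letter" where
  "flipl x = (fst x, \<not> snd x)"

definition finv :: "letter list \<Rightarrow> letter list" where
  "finv w = rev (map flipl w)"

definition stp :: "letter \<Rightarrow> letter list \<Rightarrow> letter list" where
  "stp x acc = (case acc of [] \<Rightarrow> [x]
                         | y # ys \<Rightarrow> (if inverse_letters x y then ys else x # acc))"

lemma reduce_stp: "reduce w = foldr stp w []"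
  unfolding reduce_def stp_def by simp

lemma flipl_flipl[simp]: "flipl (flipl x) = x"
  by (simp add: flipl_def)

lemma snd_flipl[simp]: "snd (flipl x) = (\<not> snd x)"
  by (simp add: flipl_def)

lemma fst_flipl[simp]: "fst (flipl x) = fst x"
  by (simp add: flipl_def)

lemma inverse_letters_iff: "inverse_letters x y \<longleftrightarrow> y = flipl x"
  by (cases x; cases y) (auto simp: inverse_letters_def flipl_def)

lemma reduced_Nil[simp]: "reduced []"
  by (simp add: reduced_def)

lemma reduced_Cons:
  "reduced (x # xs) \<longleftrightarrow> reduced xs \<and> (\<forall>y ys. xs = y # ys \<longrightarrow> y \<noteq> flipl x)"
proof
  assume r: "reduced (x # xs)"
  have "reduced xs"
    unfolding reduced_def
  proof (intro allI impI)
    fix i assume "Suc i < length xs"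
    with r show "\<not> inverse_letters (xs ! i) (xs ! Suc i)"
      unfolding reduced_def by (metis Suc_less_eq length_Cons nth_Cons_Suc)
  qed
  moreover have "\<forall>y ys. xs = y # ys \<longrightarrow> y \<noteq> flipl x"
    using r unfolding reduced_def by (auto simp: inverse_letters_iff)
  ultimately show "reduced xs \<and> (\<forall>y ys. xs = y # ys \<longrightarrow> y \<noteq> flipl x)" by blast
next
  assume a: "reduced xs \<and> (\<forall>y ys. xs = y # ys \<longrightarrow> y \<noteq> flipl x)"
  show "reduced (x # xs)"
    unfolding reduced_def
  proof (intro allI impI)
    fix i assume i: "Suc i < length (x # xs)"
    show "\<not> inverse_letters ((x # xs) ! i) ((x # xs) ! Suc i)"
    proof (cases i)
      case 0
      then show ?thesis using a i by (cases xs) (auto simp: inverse_letters_iff)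
    next
      case (Suc j)
      then show ?thesis using a i unfolding reduced_def by auto
    qed
  qed
qed

lemma reduced_stp: "reduced acc \<Longrightarrow> reduced (stp x acc)"
  by (cases acc) (auto simp: stp_def reduced_Cons inverse_letters_iff)

lemma reduced_foldr: "reduced acc \<Longrightarrow> reduced (foldr stp u acc)"
  by (induction u) (auto intro: reduced_stp)

lemma reduced_reduce: "reduced (reduce w)"
  unfolding reduce_stp by (rule reduced_foldr) simp

lemma reduce_reduced: "reduced w \<Longrightarrow> reduce w = w"
proof (induction w)
  case Nil then show ?case by (simp add: reduce_stp)
next
  case (Cons x w)
  then have "reduced w" "\<forall>y ys. w = y # ys \<longrightarrow> y \<noteq> flipl x" by (auto simp: reduced_Cons)
  then show ?case using Cons.IH unfolding reduce_stp
    by (cases w) (auto simp: stp_def inverse_letters_iff)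
qed

lemma stp_cancel: "reduced acc \<Longrightarrow> stp x (stp (flipl x) acc) = acc"
proof (cases acc)
  case Nil then show ?thesis by (simp add: stp_def inverse_letters_iff)
next
  case (Cons y ys)
  assume r: "reduced acc"
  show ?thesis
  proof (cases "y = x")
    case True
    with r Cons have "reduced ys" "\<forall>z zs. ys = z # zs \<longrightarrow> z \<noteq> flipl x"
      by (auto simp: reduced_Cons)
    then show ?thesis using Cons True
      by (cases ys) (auto simp: stp_def inverse_letters_iff)
  next
    case False
    then show ?thesis using Cons
      by (auto simp: stp_def inverse_letters_iff)
  qed
qed

lemma stp_foldr: "reduced r \<Longrightarrow> reduced acc \<Longrightarrow>
   stp x (foldr stp r acc) = foldr stp (stp x r) acc"
proof (cases r)
  case Nil then show ?thesis by (simp add: stp_def)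
next
  case (Cons y ys)
  assume rr: "reduced r" and ra: "reduced acc"
  show ?thesis
  proof (cases "y = flipl x")
    case True
    have "stp x r = ys" using Cons True by (simp add: stp_def inverse_letters_iff)
    moreover have "stp x (foldr stp r acc) = foldr stp ys acc"
      using Cons True stp_cancel[OF reduced_foldr[OF ra, of ys], of x] by simp
    ultimately show ?thesis by simp
  next
    case False
    then have "stp x r = x # r" using Cons by (simp add: stp_def inverse_letters_iff)
    then show ?thesis by simp
  qed
qed

lemma foldr_reduce: "reduced acc \<Longrightarrow> foldr stp u acc = foldr stp (reduce u) acc"
proof (induction u)
  case Nil then show ?case by (simp add: reduce_stp)
next
  case (Cons x u)
  have "foldr stp (x # u) acc = stp x (foldr stp (reduce u) acc)" using Cons by simp
  also have "\<dots> = foldr stp (stp x (reduce u)) acc"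
    by (rule stp_foldr[OF reduced_reduce Cons.prems])
  also have "stp x (reduce u) = reduce (x # u)" by (simp add: reduce_stp)
  finally show ?case .
qed

lemma reduce_append: "reduce (u @ v) = foldr stp u (reduce v)"
  by (simp add: reduce_stp)

lemma reduce_left: "reduce (reduce u @ v) = reduce (u @ v)"
  unfolding reduce_append using foldr_reduce[OF reduced_reduce] by metis

lemma reduce_right: "reduce (u @ reduce v) = reduce (u @ v)"
  unfolding reduce_append by (simp add: reduce_reduced reduced_reduce)

lemma reduce_mid: "reduce (u @ reduce v @ w) = reduce (u @ v @ w)"
  by (metis reduce_left reduce_right)

lemma reduce_Nil[simp]: "reduce [] = []"
  by (simp add: reduce_def)

lemma finv_Cons: "finv (x # u) = finv u @ [flipl x]"
  by (simp add: finv_def)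

lemma finv_Nil[simp]: "finv [] = []" by (simp add: finv_def)

lemma finv_append: "finv (u @ v) = finv v @ finv u"
  by (simp add: finv_def)

lemma finv_finv[simp]: "finv (finv u) = u"
  by (simp add: finv_def rev_map comp_def)

lemma reduce_finv_left: "reduce (finv u @ u) = []"
proof (induction u)
  case Nil then show ?case by simp
next
  case (Cons x u)
  have "reduce (finv (x # u) @ x # u) = foldr stp (finv u) (stp (flipl x) (stp x (reduce u)))"
    by (simp add: finv_Cons reduce_stp)
  also have "\<dots> = foldr stp (finv u) (reduce u)"
    using stp_cancel[OF reduced_reduce, of "flipl x" u] by simp
  also have "\<dots> = reduce (finv u @ u)" by (simp add: reduce_append)
  finally show ?case using Cons by simp
qed

lemma reduce_finv_right: "reduce (u @ finv u) = []"
  using reduce_finv_left[of "finv u"] by simp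

lemma set_stp: "set (stp x acc) \<subseteq> insert x (set acc)"
  by (cases acc) (auto simp: stp_def)

lemma set_foldr_stp: "set (foldr stp u acc) \<subseteq> set u \<union> set acc"
  apply (induction u)
   apply simp
  using set_stp by fastforce

lemma set_reduce: "set (reduce w) \<subseteq> set w"
  using set_foldr_stp[of w "[]"] by (simp add: reduce_stp)

lemma carrier_fg: "carrier (free_group d) = {w. reduced w \<and> (\<forall>x \<in> set w. fst x < d)}"
  by (simp add: free_group_def)

lemma mult_fg: "x \<otimes>\<^bsub>free_group d\<^esub> y = reduce (x @ y)"
  by (simp add: free_group_def)

lemma one_fg: "\<one>\<^bsub>free_group d\<^esub> = []"
  by (simp add: free_group_def)

lemma finv_carrier: "x \<in> carrier (free_group d) \<Longrightarrow> reduce (finv x) \<in> carrier (free_group d)"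
proof -
  assume x: "x \<in> carrier (free_group d)"
  have "\<forall>y\<in>set (reduce (finv x)). fst y < d"
  proof
    fix y assume "y \<in> set (reduce (finv x))"
    then have "y \<in> flipl ` set x" using set_reduce[of "finv x"] by (auto simp: finv_def)
    then show "fst y < d" using x by (auto simp: carrier_fg)
  qed
  then show ?thesis by (simp add: carrier_fg reduced_reduce)
qed

lemma group_fg: "group (free_group d)"
proof (rule groupI)
  fix x y assume "x \<in> carrier (free_group d)" "y \<in> carrier (free_group d)"
  then show "x \<otimes>\<^bsub>free_group d\<^esub> y \<in> carrier (free_group d)"
    using set_reduce[of "x @ y"] by (auto simp: carrier_fg mult_fg reduced_reduce)
next
  show "\<one>\<^bsub>free_group d\<^esub> \<in> carrier (free_group d)" by (simp add: carrier_fg one_fg)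
next
  fix x y z
  show "x \<otimes>\<^bsub>free_group d\<^esub> y \<otimes>\<^bsub>free_group d\<^esub> z = x \<otimes>\<^bsub>free_group d\<^esub> (y \<otimes>\<^bsub>free_group d\<^esub> z)"
    by (simp add: mult_fg reduce_left reduce_right)
next
  fix x assume "x \<in> carrier (free_group d)"
  then show "\<one>\<^bsub>free_group d\<^esub> \<otimes>\<^bsub>free_group d\<^esub> x = x"
    by (simp add: carrier_fg one_fg mult_fg reduce_reduced)
next
  fix x assume x: "x \<in> carrier (free_group d)"
  show "\<exists>y\<in>carrier (free_group d). y \<otimes>\<^bsub>free_group d\<^esub> x = \<one>\<^bsub>free_group d\<^esub>"
  proof (intro bexI)
    show "reduce (finv x) \<otimes>\<^bsub>free_group d\<^esub> x = \<one>\<^bsub>free_group d\<^esub>"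
      by (simp add: mult_fg one_fg reduce_left reduce_finv_left)
    show "reduce (finv x) \<in> carrier (free_group d)"
      using x by (rule finv_carrier)
  qed
qed

lemma inv_fg: assumes "x \<in> carrier (free_group d)"
  shows "inv\<^bsub>free_group d\<^esub> x = reduce (finv x)"
proof -
  interpret group "free_group d" by (rule group_fg)
  have c: "reduce (finv x) \<in> carrier (free_group d)"
    using assms by (rule finv_carrier)
  have "reduce (finv x) \<otimes>\<^bsub>free_group d\<^esub> x = \<one>\<^bsub>free_group d\<^esub>"
    by (simp add: mult_fg one_fg reduce_left reduce_finv_left)
  then show ?thesis using inv_equality[OF _ assms c] by simp
qed

definition levl :: "letter \<Rightarrow> int" where
  "levl x = (if fst x = 0 then (if snd x then 1 else -1) else 0)"

definition lev :: "letter list \<Rightarrow> int" where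
  "lev w = sum_list (map levl w)"

fun dl :: "int set \<Rightarrow> int \<Rightarrow> letter list \<Rightarrow> letter list" where
  "dl T p [] = []"
| "dl T p (x # xs) = (if fst x \<noteq> 0 \<and> p \<in> T then [] else [x]) @ dl T (p + levl x) xs"

fun lvs :: "letter list \<Rightarrow> int set" where
  "lvs [] = {}"
| "lvs (x # xs) = (if fst x \<noteq> 0 then {0} else {}) \<union> (\<lambda>c. c + levl x) ` lvs xs"

lemma levl_flipl[simp]: "levl (flipl x) = - levl x"
  by (simp add: levl_def flipl_def)

lemma lev_Nil[simp]: "lev [] = 0" by (simp add: lev_def)
lemma lev_Cons[simp]: "lev (x # w) = levl x + lev w" by (simp add: lev_def)
lemma lev_append[simp]: "lev (u @ v) = lev u + lev v" by (simp add: lev_def)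

lemma lev_stp: "lev (stp x acc) = levl x + lev acc"
  by (cases acc) (auto simp: stp_def inverse_letters_iff)

lemma lev_foldr: "lev (foldr stp u acc) = lev u + lev acc"
  by (induction u) (auto simp: lev_stp)

lemma lev_reduce[simp]: "lev (reduce w) = lev w"
  using lev_foldr[of w "[]"] by (simp add: reduce_stp)

lemma lev_finv[simp]: "lev (finv w) = - lev w"
  by (induction w) (auto simp: finv_Cons)

lemma dl_append: "dl T p (u @ v) = dl T p u @ dl T (p + lev u) v"
  by (induction u arbitrary: p) (auto simp: add.assoc)

lemma lev_dl[simp]: "lev (dl T p w) = lev w"
  by (induction w arbitrary: p) (auto simp: levl_def)

lemma reduce_Cons_cancel: "reduce (x # flipl x # z) = reduce z"
proof -
  have "reduce (x # flipl x # z) = stp x (stp (flipl x) (reduce z))"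
    by (simp add: reduce_stp)
  then show ?thesis using stp_cancel[OF reduced_reduce] by simp
qed

lemma reduce_dl_stp: "reduce (dl T p (stp x r)) = reduce (dl T p (x # r))"
proof (cases r)
  case Nil then show ?thesis by (simp add: stp_def)
next
  case (Cons y ys)
  show ?thesis
  proof (cases "y = flipl x")
    case True
    then have e: "stp x r = ys" using Cons by (simp add: stp_def inverse_letters_iff)
    have "dl T p (x # r) = (if fst x \<noteq> 0 \<and> p \<in> T then [] else [x, flipl x]) @ dl T p ys"
      using Cons True by (auto simp: levl_def)
    then show ?thesis using e
      by (auto simp: reduce_Cons_cancel)
  next
    case False
    then show ?thesis using Cons by (simp add: stp_def inverse_letters_iff)
  qed
qed

lemma reduce_dl_foldr: "reduce (dl T p (foldr stp w acc)) = reduce (dl T p (w @ acc))"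
proof (induction w arbitrary: p)
  case Nil then show ?case by simp
next
  case (Cons x w)
  have "reduce (dl T p (foldr stp (x # w) acc)) = reduce (dl T p (x # foldr stp w acc))"
    by (simp add: reduce_dl_stp)
  also have "\<dots> = reduce ((if fst x \<noteq> 0 \<and> p \<in> T then [] else [x]) @ reduce (dl T (p + levl x) (foldr stp w acc)))"
    by (simp add: reduce_right)
  also have "\<dots> = reduce ((if fst x \<noteq> 0 \<and> p \<in> T then [] else [x]) @ reduce (dl T (p + levl x) (w @ acc)))"
    using Cons by simp
  also have "\<dots> = reduce (dl T p ((x # w) @ acc))"
    by (simp add: reduce_right)
  finally show ?case .
qed

lemma reduce_dl_reduce: "reduce (dl T p (reduce w)) = reduce (dl T p w)"
  using reduce_dl_foldr[of T p w "[]"] by (simp add: reduce_stp)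

lemma dl_finv: "dl T p (finv g) = finv (dl T (p - lev g) g)"
proof (induction g arbitrary: p)
  case Nil then show ?case by simp
next
  case (Cons x g)
  have "dl T p (finv (x # g)) = finv (dl T (p - lev g) g) @ dl T (p - lev g) [flipl x]"
    by (simp add: finv_Cons dl_append Cons)
  moreover have "dl T (p - lev (x # g)) (x # g) =
     (if fst x \<noteq> 0 \<and> p - lev (x # g) \<in> T then [] else [x]) @ dl T (p - lev g) g"
    by simp
  ultimately show ?case
    by (auto simp: finv_append finv_Cons levl_def)
qed

lemma dl_cong: "(\<forall>c\<in>lvs w. p + c \<in> T \<longleftrightarrow> p' + c \<in> T') \<Longrightarrow> dl T p w = dl T' p' w"
proof (induction w arbitrary: p p')
  case Nil then show ?case by simp
next
  case (Cons x w)
  have h: "\<forall>c\<in>lvs w. (p + levl x) + c \<in> T \<longleftrightarrow> (p' + levl x) + c \<in> T'"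
  proof
    fix c assume "c \<in> lvs w"
    then have "c + levl x \<in> lvs (x # w)" by simp
    then have "p + (c + levl x) \<in> T \<longleftrightarrow> p' + (c + levl x) \<in> T'" using Cons.prems by blast
    then show "(p + levl x) + c \<in> T \<longleftrightarrow> (p' + levl x) + c \<in> T'" by (simp add: algebra_simps)
  qed
  have "fst x \<noteq> 0 \<Longrightarrow> (p \<in> T \<longleftrightarrow> p' \<in> T')" using Cons.prems by auto
  then show ?case using Cons.IH[OF h] by auto
qed

lemma dl_id: "(\<forall>c\<in>lvs w. p + c \<notin> T) \<Longrightarrow> dl T p w = w"
proof (induction w arbitrary: p)
  case Nil then show ?case by simp
next
  case (Cons x w)
  have h: "\<forall>c\<in>lvs w. (p + levl x) + c \<notin> T"
  proof
    fix c assume "c \<in> lvs w"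
    then have "c + levl x \<in> lvs (x # w)" by simp
    then have "p + (c + levl x) \<notin> T" using Cons.prems by blast
    then show "(p + levl x) + c \<notin> T" by (simp add: algebra_simps)
  qed
  have "fst x \<noteq> 0 \<Longrightarrow> p \<notin> T" using Cons.prems by auto
  then show ?case using Cons.IH[OF h] by auto
qed

lemma levl_abs: "\<bar>levl x\<bar> \<le> 1" by (simp add: levl_def)

lemma lvs_bound: "c \<in> lvs w \<Longrightarrow> \<bar>c\<bar> \<le> int (length w)"
proof (induction w arbitrary: c)
  case Nil then show ?case by simp
next
  case (Cons x w)
  then show ?case
  proof (cases "c \<in> (\<lambda>c. c + levl x) ` lvs w")
    case True
    then obtain c' where "c' \<in> lvs w" "c = c' + levl x" by blast
    then show ?thesis using Cons.IH[of c'] levl_abs[of x] by simp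
  next
    case False
    then have "c = 0" using Cons.prems by (auto split: if_splits)
    then show ?thesis by simp
  qed
qed

definition Dset :: "int set \<Rightarrow> nat \<Rightarrow> int \<Rightarrow> letter list set" where
  "Dset T d p = {w \<in> carrier (free_group d). reduce (dl T p w) = []}"

lemma D_lev: "w \<in> Dset T d p \<Longrightarrow> lev w = 0"
proof -
  assume "w \<in> Dset T d p"
  then have "reduce (dl T p w) = []" by (simp add: Dset_def)
  then have "lev (reduce (dl T p w)) = 0" by simp
  then show ?thesis by simp
qed

lemma reduce_finv_zero: "reduce u = [] \<Longrightarrow> reduce (finv u) = []"
  by (metis append_Nil2 reduce_finv_left reduce_right)

lemma reduce_conj_iff: "reduce (A @ B @ finv A) = [] \<longleftrightarrow> reduce B = []"
proof
  assume "reduce B = []"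
  then show "reduce (A @ B @ finv A) = []"
    by (metis append_Nil reduce_finv_right reduce_mid)
next
  assume h: "reduce (A @ B @ finv A) = []"
  have "reduce B = reduce (reduce (finv A @ A) @ B @ reduce (finv A @ A))"
    by (simp add: reduce_finv_left)
  also have "\<dots> = reduce (finv A @ A @ B @ finv A @ A)"
    by (metis append.assoc reduce_left reduce_mid reduce_right)
  also have "\<dots> = reduce (finv A @ reduce (A @ B @ finv A) @ A)"
    by (metis append.assoc reduce_mid)
  also have "\<dots> = []" using h by (simp add: reduce_finv_left)
  finally show "reduce B = []" .
qed

lemma lev_mult: "lev (x \<otimes>\<^bsub>free_group d\<^esub> y) = lev x + lev y"
  by (simp add: mult_fg)

lemma lev_inv: "x \<in> carrier (free_group d) \<Longrightarrow> lev (inv\<^bsub>free_group d\<^esub> x) = - lev x"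
  by (simp add: inv_fg)

lemma lev_pow: "lev (x [^]\<^bsub>free_group d\<^esub> (n::nat)) = int n * lev x"
proof (induction n)
  case 0 then show ?case by (simp add: one_fg)
next
  case (Suc n)
  interpret group "free_group d" by (rule group_fg)
  show ?case by (simp add: lev_mult Suc algebra_simps)
qed

lemma D_subgroup: "subgroup (Dset T d p) (free_group d)"
proof -
  interpret group "free_group d" by (rule group_fg)
  show ?thesis
  proof (rule subgroupI)
    show "Dset T d p \<subseteq> carrier (free_group d)" by (auto simp: Dset_def)
    show "Dset T d p \<noteq> {}"
      using one_closed by (auto simp: Dset_def one_fg intro!: exI[of _ "[]"])
  next
    fix a assume a: "a \<in> Dset T d p"
    then have ac: "a \<in> carrier (free_group d)" and r: "reduce (dl T p a) = []"
      by (auto simp: Dset_def)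
    have "reduce (dl T p (inv\<^bsub>free_group d\<^esub> a)) = reduce (dl T p (finv a))"
      by (simp add: inv_fg ac reduce_dl_reduce)
    also have "\<dots> = reduce (finv (dl T p a))"
      using D_lev[OF a] by (simp add: dl_finv)
    also have "\<dots> = []" using r by (rule reduce_finv_zero)
    finally show "inv\<^bsub>free_group d\<^esub> a \<in> Dset T d p"
      using ac by (simp add: Dset_def)
  next
    fix a b assume a: "a \<in> Dset T d p" and b: "b \<in> Dset T d p"
    then have ac: "a \<in> carrier (free_group d)" and bc: "b \<in> carrier (free_group d)"
      and ra: "reduce (dl T p a) = []" and rb: "reduce (dl T p b) = []"
      by (auto simp: Dset_def)
    have "reduce (dl T p (a \<otimes>\<^bsub>free_group d\<^esub> b)) = reduce (dl T p a @ dl T p b)"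
      using D_lev[OF a] by (simp add: mult_fg reduce_dl_reduce dl_append)
    also have "\<dots> = reduce (reduce (dl T p a) @ reduce (dl T p b))"
      by (simp add: reduce_left reduce_right)
    also have "\<dots> = []" using ra rb by simp
    finally show "a \<otimes>\<^bsub>free_group d\<^esub> b \<in> Dset T d p"
      using ac bc by (simp add: Dset_def)
  qed
qed

lemma conj_mem:
  assumes g: "g \<in> carrier (free_group d)" and h: "h \<in> Dset T d q"
  shows "g \<otimes>\<^bsub>free_group d\<^esub> h \<otimes>\<^bsub>free_group d\<^esub> inv\<^bsub>free_group d\<^esub> g \<in> Dset T d (q - lev g)"
proof -
  have hc: "h \<in> carrier (free_group d)" and rh: "reduce (dl T q h) = []"
    using h by (auto simp: Dset_def)
  have lh: "lev h = 0" using D_lev[OF h] .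
  have e: "g \<otimes>\<^bsub>free_group d\<^esub> h \<otimes>\<^bsub>free_group d\<^esub> inv\<^bsub>free_group d\<^esub> g = reduce (g @ h @ finv g)"
    unfolding mult_fg inv_fg[OF g] by (metis append.assoc reduce_left reduce_right)
  have "dl T (q - lev g) (g @ h @ finv g) = dl T (q - lev g) g @ dl T q h @ finv (dl T (q - lev g) g)"
    using lh by (simp add: dl_append dl_finv)
  then have "reduce (dl T (q - lev g) (reduce (g @ h @ finv g))) = []"
    using rh by (simp only: reduce_dl_reduce reduce_conj_iff)
  moreover have "g \<otimes>\<^bsub>free_group d\<^esub> h \<otimes>\<^bsub>free_group d\<^esub> inv\<^bsub>free_group d\<^esub> g \<in> carrier (free_group d)"
    using g hc by (meson group.inv_closed group_fg monoid.m_closed group.is_monoid)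
  ultimately show ?thesis using e by (simp add: Dset_def)
qed

lemma (in group) inv_cancel_left:
  "g \<in> carrier G \<Longrightarrow> h \<in> carrier G \<Longrightarrow> inv g \<otimes> (g \<otimes> h) = h"
  by (simp add: m_assoc[symmetric])

lemma (in group) conj_cancel1:
  assumes "g \<in> carrier G" "h \<in> carrier G"
  shows "inv g \<otimes> (g \<otimes> h \<otimes> inv g) \<otimes> g = h"
proof -
  have c: "inv g \<otimes> (g \<otimes> h) = h" using assms by (simp add: m_assoc[symmetric])
  show ?thesis using assms by (simp add: m_assoc c)
qed

lemma (in group) conj_cancel2:
  assumes "g \<in> carrier G" "h \<in> carrier G"
  shows "g \<otimes> (inv g \<otimes> h \<otimes> g) \<otimes> inv g = h"
  using conj_cancel1[of "inv g" h] assms by simp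

lemma (in group) conj_sub_mem_iff:
  assumes "H \<subseteq> carrier G" "g \<in> carrier G" "x \<in> carrier G"
  shows "x \<in> conj_sub G g H \<longleftrightarrow> inv g \<otimes> x \<otimes> g \<in> H"
proof
  assume "x \<in> conj_sub G g H"
  then obtain h where h: "h \<in> H" "x = g \<otimes> h \<otimes> inv g" by (auto simp: conj_sub_def)
  then have "h \<in> carrier G" using assms by auto
  then have "inv g \<otimes> x \<otimes> g = h" using h(2) assms conj_cancel1 by simp
  then show "inv g \<otimes> x \<otimes> g \<in> H" using h by simp
next
  assume a: "inv g \<otimes> x \<otimes> g \<in> H"
  have "x = g \<otimes> (inv g \<otimes> x \<otimes> g) \<otimes> inv g" using assms conj_cancel2 by simp
  then show "x \<in> conj_sub G g H" using a unfolding conj_sub_def by blast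
qed

lemma conj_sub_memI: "h \<in> H \<Longrightarrow> g \<otimes>\<^bsub>G\<^esub> h \<otimes>\<^bsub>G\<^esub> inv\<^bsub>G\<^esub> g \<in> conj_sub G g H"
  unfolding conj_sub_def by (rule CollectI, rule exI[of _ h], simp)

lemma conj_sub_memE: "a \<in> conj_sub G g H \<Longrightarrow> (\<And>h. h \<in> H \<Longrightarrow> a = g \<otimes>\<^bsub>G\<^esub> h \<otimes>\<^bsub>G\<^esub> inv\<^bsub>G\<^esub> g \<Longrightarrow> P) \<Longrightarrow> P"
  unfolding conj_sub_def by blast

lemma (in group) conj_sub_subgroup:
  assumes "subgroup H G" "g \<in> carrier G"
  shows "subgroup (conj_sub G g H) G"
proof (rule subgroupI)
  have Hc: "H \<subseteq> carrier G" using assms subgroup.subset by blast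
  show "conj_sub G g H \<subseteq> carrier G"
  proof
    fix a assume "a \<in> conj_sub G g H"
    then obtain h where h: "h \<in> H" "a = g \<otimes> h \<otimes> inv g" by (rule conj_sub_memE)
    then show "a \<in> carrier G" using Hc assms by auto
  qed
  show "conj_sub G g H \<noteq> {}"
    using conj_sub_memI[OF subgroup.one_closed[OF assms(1)], of G g] by auto
next
  have Hc: "H \<subseteq> carrier G" using assms subgroup.subset by blast
  fix a assume a: "a \<in> conj_sub G g H"
  then obtain h where h: "h \<in> H" "a = g \<otimes> h \<otimes> inv g" by (rule conj_sub_memE)
  have hc: "h \<in> carrier G" using h Hc by auto
  have e: "inv a = g \<otimes> inv h \<otimes> inv g"
    using hc assms h(2) by (simp add: inv_mult_group m_assoc)
  have "inv h \<in> H" by (rule subgroup.m_inv_closed[OF assms(1) h(1)])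
  then have "g \<otimes> inv h \<otimes> inv g \<in> conj_sub G g H" by (rule conj_sub_memI)
  then show "inv a \<in> conj_sub G g H" by (simp only: e)
next
  have Hc: "H \<subseteq> carrier G" using assms subgroup.subset by blast
  fix a b assume a: "a \<in> conj_sub G g H" and b: "b \<in> conj_sub G g H"
  obtain h where h: "h \<in> H" "a = g \<otimes> h \<otimes> inv g" using a by (rule conj_sub_memE)
  obtain k where k: "k \<in> H" "b = g \<otimes> k \<otimes> inv g" using b by (rule conj_sub_memE)
  have hc: "h \<in> carrier G" "k \<in> carrier G" using h k Hc by auto
  have "a \<otimes> b = g \<otimes> (h \<otimes> k) \<otimes> inv g"
    using h k hc assms by (simp add: m_assoc inv_cancel_left)
  moreover have "h \<otimes> k \<in> H" by (rule subgroup.m_closed[OF assms(1) h(1) k(1)])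
  then have "g \<otimes> (h \<otimes> k) \<otimes> inv g \<in> conj_sub G g H" by (rule conj_sub_memI)
  ultimately show "a \<otimes> b \<in> conj_sub G g H" by (simp only:)
qed

lemma conj_D:
  assumes g: "g \<in> carrier (free_group d)"
  shows "conj_sub (free_group d) g (Dset T d q) = Dset T d (q - lev g)"
proof
  interpret group "free_group d" by (rule group_fg)
  show "conj_sub (free_group d) g (Dset T d q) \<subseteq> Dset T d (q - lev g)"
  proof
    fix a assume "a \<in> conj_sub (free_group d) g (Dset T d q)"
    then obtain h where "h \<in> Dset T d q" "a = g \<otimes>\<^bsub>free_group d\<^esub> h \<otimes>\<^bsub>free_group d\<^esub> inv\<^bsub>free_group d\<^esub> g"
      by (rule conj_sub_memE)
    then show "a \<in> Dset T d (q - lev g)" using conj_mem[OF g] by simp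
  qed
  show "Dset T d (q - lev g) \<subseteq> conj_sub (free_group d) g (Dset T d q)"
  proof
    fix x assume x: "x \<in> Dset T d (q - lev g)"
    have xc: "x \<in> carrier (free_group d)" using x by (simp add: Dset_def)
    have "inv\<^bsub>free_group d\<^esub> g \<otimes>\<^bsub>free_group d\<^esub> x \<otimes>\<^bsub>free_group d\<^esub> inv\<^bsub>free_group d\<^esub> (inv\<^bsub>free_group d\<^esub> g)
       \<in> Dset T d (q - lev g - lev (inv\<^bsub>free_group d\<^esub> g))"
      using conj_mem[OF inv_closed[OF g] x] .
    then have "inv\<^bsub>free_group d\<^esub> g \<otimes>\<^bsub>free_group d\<^esub> x \<otimes>\<^bsub>free_group d\<^esub> g \<in> Dset T d q"
      using g by (simp add: lev_inv)
    then show "x \<in> conj_sub (free_group d) g (Dset T d q)"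
      using conj_sub_mem_iff[OF _ g xc] by (simp add: Dset_def)
  qed
qed

definition Lf :: "nat \<Rightarrow> int" where
  "Lf i = fact (i + 8)"

definition Sset :: "int set" where
  "Sset = {x. \<exists>K c. (\<forall>i. c i \<in> {-1,0,1}) \<and> x = (\<Sum>i<K. c i * Lf i)}"

lemma Lf_pos: "0 < Lf i"
  by (simp add: Lf_def)

lemma Lf_Suc: "9 * Lf i \<le> Lf (Suc i)"
proof -
  have "Lf (Suc i) = of_nat (i + 9) * Lf i"
  proof -
    have "Suc i + 8 = Suc (i + 8)" by simp
    then have "Lf (Suc i) = fact (Suc (i + 8))" by (simp add: Lf_def)
    also have "\<dots> = of_nat (Suc (i + 8)) * fact (i + 8)" by (rule fact_Suc)
    finally show ?thesis by (simp add: Lf_def)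
  qed
  then show ?thesis using Lf_pos[of i] by (simp add: mult_right_mono)
qed

lemma Lf_mono: "i \<le> j \<Longrightarrow> Lf i \<le> Lf j"
proof (induction j)
  case 0 then show ?case by simp
next
  case (Suc j)
  then show ?case using Lf_Suc[of j] Lf_pos[of j]
    by (cases "i = Suc j") (auto simp: le_Suc_eq)
qed

lemma Lf_less: "i < j \<Longrightarrow> 9 * Lf i \<le> Lf j"
  using Lf_Suc[of i] Lf_mono[of "Suc i" j] by simp

lemma Lf_ge: "int i \<le> Lf i"
proof -
  have "int (i + 8) \<le> fact (i + 8)"
    by (metis fact_ge_self of_nat_fact of_nat_le_iff)
  then show ?thesis by (simp add: Lf_def)
qed

lemma sum_Lf: "8 * (\<Sum>i<K. Lf i) \<le> Lf K"
proof (induction K)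
  case 0 then show ?case using Lf_pos[of 0] by simp
next
  case (Suc K)
  then show ?case using Lf_Suc[of K] by simp
qed

lemma digits_bound:
  assumes "\<forall>i. \<bar>c i\<bar> \<le> 2"
  shows "4 * \<bar>\<Sum>i<K. c i * Lf i\<bar> \<le> Lf K"
proof -
  have "\<bar>\<Sum>i<K. c i * Lf i\<bar> \<le> (\<Sum>i<K. \<bar>c i * Lf i\<bar>)" by (rule sum_abs)
  also have "\<dots> \<le> (\<Sum>i<K. 2 * Lf i)"
  proof (rule sum_mono)
    fix i show "\<bar>c i * Lf i\<bar> \<le> 2 * Lf i"
      using assms Lf_pos[of i] by (simp add: abs_mult mult_right_mono)
  qed
  also have "\<dots> = 2 * (\<Sum>i<K. Lf i)" by (simp add: sum_distrib_left)
  finally show ?thesis using sum_Lf[of K] by simp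
qed

lemma trunc:
  assumes "\<forall>i. \<bar>c i\<bar> \<le> 2" "4 * \<bar>\<Sum>i<J. c i * Lf i\<bar> < 3 * Lf K"
  shows "K \<le> i \<Longrightarrow> i < J \<Longrightarrow> c i = 0"
  using assms(2)
proof (induction J arbitrary: i)
  case 0 then show ?case by simp
next
  case (Suc J)
  have cJ: "c J = 0" if "K \<le> J"
  proof (rule ccontr)
    assume "c J \<noteq> 0"
    then have "1 \<le> \<bar>c J\<bar>" by simp
    then have "Lf J \<le> \<bar>c J * Lf J\<bar>" using Lf_pos[of J] by (simp add: abs_mult mult_right_mono)
    moreover have "4 * \<bar>\<Sum>i<J. c i * Lf i\<bar> \<le> Lf J" by (rule digits_bound[OF assms(1)])
    moreover have "(\<Sum>i<Suc J. c i * Lf i) = (\<Sum>i<J. c i * Lf i) + c J * Lf J" by simp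
    moreover have "Lf K \<le> Lf J" using that by (rule Lf_mono)
    ultimately show False using Suc.prems(3) by linarith
  qed
  show ?case
  proof (cases "i = J")
    case True then show ?thesis using cJ Suc.prems by simp
  next
    case False
    then have "i < J" using Suc.prems by simp
    then have "K \<le> J" using Suc.prems by simp
    then have cJ0: "c J = 0" using cJ by simp
    have "4 * \<bar>\<Sum>i<J. c i * Lf i\<bar> < 3 * Lf K" using Suc.prems(3) cJ0 by simp
    then show ?thesis using Suc.IH[OF Suc.prems(1) \<open>i < J\<close>] by blast
  qed
qed

lemma sum_beyond:
  assumes "\<forall>i\<ge>K. c i = 0" "K \<le> N"
  shows "(\<Sum>i<N. c i * Lf i) = (\<Sum>i<K. c i * Lf i)"
proof -
  have "(\<Sum>i<N. c i * Lf i) = (\<Sum>i<K. c i * Lf i) + (\<Sum>i\<in>{K..<N}. c i * Lf i)"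
    using assms(2) by (metis atLeast0LessThan le0 sum.atLeastLessThan_concat)
  moreover have "(\<Sum>i\<in>{K..<N}. c i * Lf i) = 0" using assms(1) by simp
  ultimately show ?thesis by simp
qed

lemma Sset_fin:
  assumes "x \<in> Sset"
  obtains K c where "\<forall>i. c i \<in> {-1,0,1}" "\<forall>i\<ge>K. c i = 0" "x = (\<Sum>i<K. c i * Lf i)"
proof -
  obtain K c where c: "\<forall>i. c i \<in> {-1,0,1}" "x = (\<Sum>i<K. c i * Lf i)"
    using assms by (auto simp: Sset_def)
  define c' where "c' i = (if i < K then c i else 0)" for i
  have "\<forall>i. c' i \<in> {-1,0,1}" using c by (simp add: c'_def)
  moreover have "\<forall>i\<ge>K. c' i = 0" by (simp add: c'_def)
  moreover have "x = (\<Sum>i<K. c' i * Lf i)" using c by (simp add: c'_def)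
  ultimately show ?thesis using that by blast
qed

lemma SsetI: "\<forall>i. c i \<in> {-1,0,1} \<Longrightarrow> (\<Sum>i<K. c i * Lf i) \<in> Sset"
  unfolding Sset_def by blast

lemma zero_in_Sset: "0 \<in> Sset"
  using SsetI[of "\<lambda>i. 0" 0] by simp

lemma digit_abs: "(c::int) \<in> {-1,0,1} \<Longrightarrow> \<bar>c\<bar> \<le> 1"
  by auto

lemma digits2: "\<forall>i. c i \<in> {-1,0,1} \<Longrightarrow> \<forall>i. \<bar>(c i::int)\<bar> \<le> 2"
proof
  fix i assume "\<forall>i. c i \<in> {-1,0,1}"
  then have "\<bar>c i\<bar> \<le> 1" using digit_abs by blast
  then show "\<bar>c i\<bar> \<le> 2" by simp
qed

lemma rec_Sset:
  assumes y: "4 * \<bar>y\<bar> < 3 * Lf K" and s: "\<sigma> \<in> {1, -1}"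
  shows "y \<in> Sset \<longleftrightarrow> y + \<sigma> * Lf K \<in> Sset"
proof
  assume "y \<in> Sset"
  then obtain J c where c: "\<forall>i. c i \<in> {-1,0,1}" "\<forall>i\<ge>J. c i = 0" "y = (\<Sum>i<J. c i * Lf i)"
    by (rule Sset_fin)
  have c2: "\<forall>i. \<bar>c i\<bar> \<le> 2" using c(1) by (rule digits2)
  have "\<forall>i\<ge>K. c i = 0"
  proof (intro allI impI)
    fix i assume "K \<le> i"
    show "c i = 0"
    proof (cases "i < J")
      case True then show ?thesis using trunc[OF c2, of J K i] y c(3) \<open>K \<le> i\<close> by simp
    next
      case False then show ?thesis using c(2) by simp
    qed
  qed
  then have yK: "y = (\<Sum>i<K. c i * Lf i)"
    using c(3) sum_beyond[OF c(2), of "max J K"] sum_beyond[of K c "max J K"] by simp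
  define c' where "c' = c(K := \<sigma>)"
  have "(\<Sum>i<K. c' i * Lf i) = (\<Sum>i<K. c i * Lf i)"
    by (rule sum.cong) (auto simp: c'_def)
  then have "(\<Sum>i<Suc K. c' i * Lf i) = (\<Sum>i<K. c i * Lf i) + \<sigma> * Lf K"
    by (simp add: c'_def)
  moreover have "\<forall>i. c' i \<in> {-1,0,1}" using c(1) s by (auto simp: c'_def)
  ultimately show "y + \<sigma> * Lf K \<in> Sset" using SsetI[of c' "Suc K"] yK by simp
next
  assume "y + \<sigma> * Lf K \<in> Sset"
  then obtain J c where c: "\<forall>i. c i \<in> {-1,0,1}" "\<forall>i\<ge>J. c i = 0" "y + \<sigma> * Lf K = (\<Sum>i<J. c i * Lf i)"
    by (rule Sset_fin)
  define N where "N = max J (Suc K)"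
  define d where "d i = c i - (if i = K then \<sigma> else 0)" for i
  have d2: "\<forall>i. \<bar>d i\<bar> \<le> 2"
  proof
    fix i
    have "\<bar>c i\<bar> \<le> 1" using c(1) digit_abs by blast
    then show "\<bar>d i\<bar> \<le> 2" using s by (auto simp: d_def)
  qed
  have "(\<Sum>i<N. c i * Lf i) = y + \<sigma> * Lf K"
    using c(3) sum_beyond[OF c(2), of N] by (simp add: N_def)
  moreover have "(\<Sum>i<N. d i * Lf i) = (\<Sum>i<N. c i * Lf i) - (\<Sum>i<N. (if i = K then \<sigma> else 0) * Lf i)"
    by (simp add: d_def left_diff_distrib sum_subtractf)
  moreover have "(\<Sum>i<N. (if i = K then \<sigma> else 0) * Lf i) = (\<Sum>i<N. if i = K then \<sigma> * Lf K else 0)"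
    by (rule sum.cong) auto
  moreover have "(\<Sum>i<N. if i = K then \<sigma> * Lf K else 0) = \<sigma> * Lf K"
    by (simp add: N_def)
  ultimately have yd: "y = (\<Sum>i<N. d i * Lf i)" by simp
  have dz: "\<forall>i\<ge>K. d i = 0"
  proof (intro allI impI)
    fix i assume "K \<le> i"
    show "d i = 0"
    proof (cases "i < N")
      case True then show ?thesis using trunc[OF d2, of N K i] y yd \<open>K \<le> i\<close> by simp
    next
      case False then show ?thesis using c(2) \<open>K \<le> i\<close> by (auto simp: d_def N_def)
    qed
  qed
  have "y = (\<Sum>i<K. d i * Lf i)" using yd sum_beyond[OF dz, of N] by (simp add: N_def)
  also have "\<dots> = (\<Sum>i<K. c i * Lf i)" by (simp add: d_def)
  finally show "y \<in> Sset" using SsetI[OF c(1)] by simp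
qed

lemma sep_Sset:
  assumes nn: "n' < n" and x: "x \<in> Sset" and x': "x' \<in> Sset" and dl: "12 * \<bar>\<delta>\<bar> \<le> Lf n"
  shows "x - x' \<noteq> 3 * (Lf n - Lf n') + \<delta>"
proof
  assume eq: "x - x' = 3 * (Lf n - Lf n') + \<delta>"
  obtain J c where c: "\<forall>i. c i \<in> {-1,0,1}" "\<forall>i\<ge>J. c i = 0" "x = (\<Sum>i<J. c i * Lf i)"
    using x by (rule Sset_fin)
  obtain J' c' where c': "\<forall>i. c' i \<in> {-1,0,1}" "\<forall>i\<ge>J'. c' i = 0" "x' = (\<Sum>i<J'. c' i * Lf i)"
    using x' by (rule Sset_fin)
  define N where "N = max (max J J') (Suc n)"
  define d where "d i = c i - c' i" for i
  have d2: "\<forall>i. \<bar>d i\<bar> \<le> 2"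
  proof
    fix i
    have "\<bar>c i\<bar> \<le> 1" "\<bar>c' i\<bar> \<le> 1" using c(1) c'(1) digit_abs by blast+
    then show "\<bar>d i\<bar> \<le> 2" by (auto simp: d_def)
  qed
  have "x = (\<Sum>i<N. c i * Lf i)" using c(3) sum_beyond[OF c(2), of N] by (simp add: N_def)
  moreover have "x' = (\<Sum>i<N. c' i * Lf i)" using c'(3) sum_beyond[OF c'(2), of N] by (simp add: N_def)
  ultimately have xd: "x - x' = (\<Sum>i<N. d i * Lf i)"
    by (simp add: d_def left_diff_distrib sum_subtractf)
  have l1: "9 * Lf n' \<le> Lf n" using Lf_less[OF nn] .
  have l2: "9 * Lf n \<le> Lf (Suc n)" by (rule Lf_Suc)
  have pn: "0 < Lf n'" by (rule Lf_pos)
  have dl2: "- Lf n \<le> 12 * \<delta>" "12 * \<delta> \<le> Lf n" using dl by (simp_all add: abs_le_iff)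
  have eq2: "12 * (x - x') = 36 * Lf n - 36 * Lf n' + 12 * \<delta>" using eq by simp
  have v1: "12 * (x - x') \<ge> 31 * Lf n" using eq2 l1 dl2 pn by linarith
  have v2: "12 * (x - x') \<le> 37 * Lf n" using eq2 l1 dl2 pn by linarith
  have pos: "0 \<le> x - x'" using v1 Lf_pos[of n] by (smt (verit))
  have "4 * (x - x') < 3 * Lf (Suc n)" using v2 l2 Lf_pos[of n] by (smt (verit))
  then have "4 * \<bar>\<Sum>i<N. d i * Lf i\<bar> < 3 * Lf (Suc n)" using pos by (simp add: xd[symmetric])
  then have dz: "\<forall>i\<ge>Suc n. d i = 0"
  proof (intro allI impI)
    fix i assume h: "4 * \<bar>\<Sum>i<N. d i * Lf i\<bar> < 3 * Lf (Suc n)" and i: "Suc n \<le> i"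
    show "d i = 0"
    proof (cases "i < N")
      case True then show ?thesis using trunc[OF d2 h i] by simp
    next
      case False then show ?thesis using c(2) c'(2) i by (auto simp: d_def N_def)
    qed
  qed
  have "x - x' = (\<Sum>i<Suc n. d i * Lf i)" using xd sum_beyond[OF dz, of N] by (simp add: N_def)
  also have "\<dots> = (\<Sum>i<n. d i * Lf i) + d n * Lf n" by simp
  finally have e2: "x - x' = (\<Sum>i<n. d i * Lf i) + d n * Lf n" .
  have "4 * \<bar>\<Sum>i<n. d i * Lf i\<bar> \<le> Lf n" by (rule digits_bound[OF d2])
  moreover have "d n * Lf n \<le> 2 * Lf n" using d2 Lf_pos[of n] by (simp add: mult_right_mono abs_le_iff)
  ultimately have "4 * (x - x') \<le> 9 * Lf n" using e2 by (smt (verit))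
  then show False using v1 Lf_pos[of n] by (smt (verit))
qed

abbreviation BB :: "('a, 'm) monoid_scheme \<Rightarrow> 'a set set set" where
  "BB G \<equiv> {{H. g \<in> H} | g. g \<in> carrier G} \<union> {{H. g \<notin> H} | g. g \<in> carrier G}"

lemma BB1: "g \<in> carrier G \<Longrightarrow> {H. g \<in> H} \<in> BB G"
  by (rule UnI1, rule CollectI, rule exI[of _ g], simp)

lemma BB2: "g \<in> carrier G \<Longrightarrow> {H. g \<notin> H} \<in> BB G"
  by (rule UnI2, rule CollectI, rule exI[of _ g], simp)

lemma BBE: "U \<in> BB G \<Longrightarrow> (\<And>g. g \<in> carrier G \<Longrightarrow> U = {H. g \<in> H} \<Longrightarrow> P)
   \<Longrightarrow> (\<And>g. g \<in> carrier G \<Longrightarrow> U = {H. g \<notin> H} \<Longrightarrow> P) \<Longrightarrow> P"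
  by auto

lemma UBB: assumes "carrier G \<noteq> {}" shows "\<Union>(BB G) = UNIV"
proof -
  obtain g where g: "g \<in> carrier G" using assms by blast
  have "H \<in> \<Union>(BB G)" for H
  proof (cases "g \<in> H")
    case True
    then have "H \<in> {H. g \<in> H}" by simp
    moreover have "{H. g \<in> H} \<in> BB G" using g by (rule BB1)
    ultimately show ?thesis by (meson UnionI)
  next
    case False
    then have "H \<in> {H. g \<notin> H}" by simp
    moreover have "{H. g \<notin> H} \<in> BB G" using g by (rule BB2)
    ultimately show ?thesis by (meson UnionI)
  qed
  then have "UNIV = \<Union>(BB G)" by (rule UNIV_eq_I)
  then show ?thesis by (rule sym)
qed

lemma topspace_chab: "carrier G \<noteq> {} \<Longrightarrow> topspace (chabauty G) = Sub G"
  unfolding chabauty_def using UBB[of G] by simp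

lemma openin_mem: "x \<in> carrier G \<Longrightarrow> openin (chabauty G) {H \<in> Sub G. x \<in> H}"
proof -
  assume x: "x \<in> carrier G"
  have "{H. x \<in> H} \<in> BB G" using x by (rule BB1)
  then have "openin (topology_generated_by (BB G)) {H. x \<in> H}" by (rule topology_generated_by_Basis)
  then have "openin (chabauty G) ({H. x \<in> H} \<inter> Sub G)"
    unfolding chabauty_def by (rule openin_subtopology_Int)
  moreover have "{H. x \<in> H} \<inter> Sub G = {H \<in> Sub G. x \<in> H}" by blast
  ultimately show ?thesis by simp
qed

lemma openin_notmem: "x \<in> carrier G \<Longrightarrow> openin (chabauty G) {H \<in> Sub G. x \<notin> H}"
proof -
  assume x: "x \<in> carrier G"
  have "{H. x \<notin> H} \<in> BB G" using x by (rule BB2)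
  then have "openin (topology_generated_by (BB G)) {H. x \<notin> H}" by (rule topology_generated_by_Basis)
  then have "openin (chabauty G) ({H. x \<notin> H} \<inter> Sub G)"
    unfolding chabauty_def by (rule openin_subtopology_Int)
  moreover have "{H. x \<notin> H} \<inter> Sub G = {H \<in> Sub G. x \<notin> H}" by blast
  ultimately show ?thesis by simp
qed

lemma chab_lim:
  assumes ne: "carrier G \<noteq> {}" and D: "\<Delta> \<in> Sub G" and f: "\<And>k. f k \<in> Sub G"
    and ev: "\<And>x. x \<in> carrier G \<Longrightarrow> eventually (\<lambda>k. x \<in> f k \<longleftrightarrow> x \<in> \<Delta>) sequentially"
  shows "limitin (chabauty G) f \<Delta> sequentially"
proof -
  have main: "eventually (\<lambda>k. f k \<in> U) sequentially"
    if "generate_topology_on (BB G) U" "\<Delta> \<in> U" for U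
    using that
  proof (induction rule: generate_topology_on.induct)
    case Empty then show ?case by simp
  next
    case (Int a b)
    then show ?case by (auto intro: eventually_conj)
  next
    case (UN K)
    then obtain k where k: "k \<in> K" "\<Delta> \<in> k" by blast
    then have "eventually (\<lambda>i. f i \<in> k) sequentially" using UN.IH by blast
    then show ?case by (rule eventually_mono) (use k in blast)
  next
    case (Basis s)
    from Basis.hyps consider (a) g where "g \<in> carrier G" "s = {H. g \<in> H}"
      | (b) g where "g \<in> carrier G" "s = {H. g \<notin> H}" by (rule BBE)
    then show ?case
    proof cases
      case a
      then show ?thesis using ev[of g] Basis.prems by (auto elim: eventually_mono)
    next
      case b
      then show ?thesis using ev[of g] Basis.prems by (auto elim: eventually_mono)
    qed
  qed
  have "limitin (topology_generated_by (BB G)) f \<Delta> sequentially"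
    unfolding limitin_def using UBB[OF ne] main by (simp add: openin_topology_generated_by_iff)
  then show ?thesis
    unfolding chabauty_def limitin_subtopology using D f by simp
qed

lemma cont_conj:
  fixes G (structure)
  assumes grp: "group G" and g: "g \<in> carrier G"
  shows "continuous_map (chabauty G) (chabauty G) (conj_sub G g)"
proof -
  interpret group G by (rule grp)
  have ne: "carrier G \<noteq> {}" using g by blast
  have ts: "topspace (chabauty G) = Sub G" by (rule topspace_chab[OF ne])
  have "continuous_map (chabauty G) (topology_generated_by (BB G)) (conj_sub G g)"
  proof (rule continuous_on_generated_topo)
    fix U assume "U \<in> BB G"
    then consider (a) x where "x \<in> carrier G" "U = {H. x \<in> H}"
      | (b) x where "x \<in> carrier G" "U = {H. x \<notin> H}" by (rule BBE)
    then show "openin (chabauty G) (conj_sub G g -` U \<inter> topspace (chabauty G))"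
    proof cases
      case a
      have y: "inv g \<otimes> x \<otimes> g \<in> carrier G" using a g by simp
      have "conj_sub G g -` U \<inter> topspace (chabauty G) = {H \<in> Sub G. inv g \<otimes> x \<otimes> g \<in> H}"
        using a g conj_sub_mem_iff[OF _ g a(1)] by (auto simp: ts Sub_def subgroup.subset)
      then show ?thesis using openin_mem[OF y] by simp
    next
      case b
      have y: "inv g \<otimes> x \<otimes> g \<in> carrier G" using b g by simp
      have "conj_sub G g -` U \<inter> topspace (chabauty G) = {H \<in> Sub G. inv g \<otimes> x \<otimes> g \<notin> H}"
        using b g conj_sub_mem_iff[OF _ g b(1)] by (auto simp: ts Sub_def subgroup.subset)
      then show ?thesis using openin_notmem[OF y] by simp
    qed
  next
    show "conj_sub G g ` topspace (chabauty G) \<subseteq> \<Union> (BB G)" using UBB[OF ne] by simp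
  qed
  moreover have "conj_sub G g \<in> topspace (chabauty G) \<rightarrow> Sub G"
    using conj_sub_subgroup g by (auto simp: ts Sub_def)
  ultimately have "continuous_map (chabauty G) (subtopology (topology_generated_by (BB G)) (Sub G)) (conj_sub G g)"
    by (rule continuous_map_into_subtopology)
  then show ?thesis unfolding chabauty_def .
qed

lemma opens_Pow: "carrier G \<noteq> {} \<Longrightarrow> {U. openin (chabauty G) U} \<subseteq> Pow (Sub G)"
  using openin_subset topspace_chab by fastforce

lemma space_cb: "carrier G \<noteq> {} \<Longrightarrow> space (chabauty_borel G) = Sub G"
  unfolding chabauty_borel_def using opens_Pow by (simp add: space_measure_of_conv)

lemma open_sets_cb: "carrier G \<noteq> {} \<Longrightarrow> openin (chabauty G) U \<Longrightarrow> U \<in> sets (chabauty_borel G)"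
proof -
  assume ne: "carrier G \<noteq> {}" and U: "openin (chabauty G) U"
  have P: "{U. openin (chabauty G) U} \<subseteq> Pow (Sub G)" by (rule opens_Pow[OF ne])
  have "U \<in> sigma_sets (Sub G) {U. openin (chabauty G) U}" using U by (simp add: sigma_sets.Basic)
  then show ?thesis unfolding chabauty_borel_def using sets_measure_of[OF P] by simp
qed

lemma meas_conj:
  assumes grp: "group G" and g: "g \<in> carrier G"
  shows "conj_sub G g \<in> measurable (chabauty_borel G) (chabauty_borel G)"
proof -
  have ne: "carrier G \<noteq> {}" using g by blast
  have c: "continuous_map (chabauty G) (chabauty G) (conj_sub G g)" by (rule cont_conj[OF grp g])
  have "conj_sub G g \<in> measurable (chabauty_borel G) (sigma (Sub G) {U. openin (chabauty G) U})"
  proof (rule measurable_measure_of)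
    show "{U. openin (chabauty G) U} \<subseteq> Pow (Sub G)" by (rule opens_Pow[OF ne])
    have "conj_sub G g ` topspace (chabauty G) \<subseteq> topspace (chabauty G)"
      by (rule continuous_map_image_subset_topspace[OF c])
    then show "conj_sub G g \<in> space (chabauty_borel G) \<rightarrow> Sub G"
      unfolding space_cb[OF ne] topspace_chab[OF ne] by (simp add: image_subset_iff_funcset)
  next
    fix U assume "U \<in> {U. openin (chabauty G) U}"
    then have U: "openin (chabauty G) U" by simp
    have o: "openin (chabauty G) {x \<in> topspace (chabauty G). conj_sub G g x \<in> U}"
      by (rule openin_continuous_map_preimage[OF c U])
    have e: "{x \<in> topspace (chabauty G). conj_sub G g x \<in> U} = conj_sub G g -` U \<inter> space (chabauty_borel G)"
      unfolding topspace_chab[OF ne] space_cb[OF ne] by blast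
    show "conj_sub G g -` U \<inter> space (chabauty_borel G) \<in> sets (chabauty_borel G)"
      using open_sets_cb[OF ne o] unfolding e .
  qed
  then show ?thesis unfolding chabauty_borel_def .
qed

lemma fg_ne: "carrier (free_group d) \<noteq> {}"
proof -
  have "[] \<in> carrier (free_group d)" by (simp add: carrier_fg)
  then show ?thesis by blast
qed

lemma D_Sub: "Dset T d p \<in> Sub (free_group d)"
  by (simp add: Sub_def D_subgroup)

lemma D_shift:
  assumes "\<forall>c\<in>lvs w. c \<in> T \<longleftrightarrow> p + c \<in> T"
  shows "w \<in> Dset T d 0 \<longleftrightarrow> w \<in> Dset T d p"
proof -
  have "dl T 0 w = dl T p w" by (rule dl_cong) (use assms in simp)
  then show ?thesis by (simp add: Dset_def)
qed

lemma D_hit: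
  assumes w: "w \<in> carrier (free_group d)" "w \<noteq> []" and m: "w \<in> Dset T d q"
  shows "\<exists>c\<in>lvs w. q + c \<in> T"
proof (rule ccontr)
  assume "\<not> (\<exists>c\<in>lvs w. q + c \<in> T)"
  then have "dl T q w = w" by (intro dl_id) blast
  moreover have "reduce w = w" using w by (simp add: carrier_fg reduce_reduced)
  ultimately have "reduce (dl T q w) = w" by simp
  then show False using m w by (simp add: Dset_def)
qed

lemma mem_shift:
  assumes g: "g \<in> carrier (free_group d)" and w: "w \<in> carrier (free_group d)"
    and m: "g \<otimes>\<^bsub>free_group d\<^esub> w \<otimes>\<^bsub>free_group d\<^esub> inv\<^bsub>free_group d\<^esub> g \<in> Dset T d p"
  shows "w \<in> Dset T d (p + lev g)"
proof -
  interpret group "free_group d" by (rule group_fg)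
  have ig: "inv\<^bsub>free_group d\<^esub> g \<in> carrier (free_group d)" using g by simp
  have "inv\<^bsub>free_group d\<^esub> g \<otimes>\<^bsub>free_group d\<^esub> (g \<otimes>\<^bsub>free_group d\<^esub> w \<otimes>\<^bsub>free_group d\<^esub> inv\<^bsub>free_group d\<^esub> g)
     \<otimes>\<^bsub>free_group d\<^esub> inv\<^bsub>free_group d\<^esub> (inv\<^bsub>free_group d\<^esub> g) \<in> Dset T d (p - lev (inv\<^bsub>free_group d\<^esub> g))"
    by (rule conj_mem[OF ig m])
  moreover have "inv\<^bsub>free_group d\<^esub> (inv\<^bsub>free_group d\<^esub> g) = g" using g by simp
  moreover have "inv\<^bsub>free_group d\<^esub> g \<otimes>\<^bsub>free_group d\<^esub> (g \<otimes>\<^bsub>free_group d\<^esub> w \<otimes>\<^bsub>free_group d\<^esub> inv\<^bsub>free_group d\<^esub> g)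
     \<otimes>\<^bsub>free_group d\<^esub> g = w" using conj_cancel1[OF g w] .
  moreover have "lev (inv\<^bsub>free_group d\<^esub> g) = - lev g" using g by (rule lev_inv)
  ultimately show ?thesis by simp
qed

lemma Lf_sq: "int K * int K \<le> Lf K"
proof -
  have "K + 8 = Suc (K + 7)" by simp
  then have "Lf K = fact (Suc (K + 7))" unfolding Lf_def by (simp only:)
  also have "\<dots> = of_nat (Suc (K + 7)) * fact (K + 7)" by (rule fact_Suc)
  finally have e: "Lf K = int (K + 8) * fact (K + 7)" by simp
  have "int (K + 7) \<le> fact (K + 7)"
    by (metis fact_ge_self of_nat_fact of_nat_le_iff)
  then have "int (K + 8) * int (K + 7) \<le> int (K + 8) * fact (K + 7)"
    by (intro mult_left_mono) auto
  moreover have "int K * int K \<le> int (K + 8) * int (K + 7)"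
    by (intro mult_mono) auto
  ultimately show ?thesis using e by linarith
qed

lemma boom:
  assumes g: "g \<in> carrier (free_group d)"
  shows "\<exists>n :: nat \<Rightarrow> nat. filterlim n at_top sequentially \<and>
        limitin (chabauty (free_group d)) (\<lambda>k. conj_sub (free_group d) (g [^]\<^bsub>free_group d\<^esub> n k) (Dset Sset d 0)) (Dset Sset d 0) sequentially"
proof -
  interpret group "free_group d" by (rule group_fg)
  define e where "e = lev g"
  have cp: "conj_sub (free_group d) (g [^]\<^bsub>free_group d\<^esub> (m::nat)) (Dset Sset d 0) = Dset Sset d (- (int m * e))" for m
    using conj_D[OF nat_pow_closed[OF g, of m], of Sset 0] by (simp add: lev_pow e_def)
  show ?thesis
  proof (cases "e = 0")
    case True
    have "limitin (chabauty (free_group d)) (\<lambda>k. conj_sub (free_group d) (g [^]\<^bsub>free_group d\<^esub> id k) (Dset Sset d 0)) (Dset Sset d 0) sequentially"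
      by (rule chab_lim[OF fg_ne D_Sub]) (simp_all add: cp True D_Sub)
    moreover have "filterlim (id :: nat \<Rightarrow> nat) at_top sequentially" unfolding id_def by (rule filterlim_ident)
    ultimately show ?thesis by blast
  next
    case False
    define K where "K k = k + nat \<bar>e\<bar>" for k
    define q where "q k = Lf (K k) div \<bar>e\<bar>" for k
    define n where "n k = nat (q k)" for k
    define \<sigma> :: int where "\<sigma> = (if e > 0 then -1 else 1)"
    have ep: "0 < \<bar>e\<bar>" using False by simp
    have dv: "\<bar>e\<bar> dvd Lf (K k)" for k
    proof -
      have "nat \<bar>e\<bar> dvd fact (K k + 8)"
        by (rule dvd_fact) (use ep in \<open>auto simp: K_def\<close>)
      then have "int (nat \<bar>e\<bar>) dvd int (fact (K k + 8))" by (simp only: of_nat_dvd_iff)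
      then show ?thesis by (simp add: Lf_def of_nat_fact)
    qed
    have qe: "q k * \<bar>e\<bar> = Lf (K k)" for k using dv[of k] by (simp add: q_def)
    have qk: "int k \<le> q k" for k
    proof -
      have "\<bar>e\<bar> * int k \<le> int (K k) * int (K k)"
        using ep by (intro mult_mono) (auto simp: K_def)
      then have "\<bar>e\<bar> * int k \<le> \<bar>e\<bar> * q k" using Lf_sq[of "K k"] qe[of k] by (simp add: mult.commute)
      then show ?thesis using ep by simp
    qed
    have nk: "k \<le> n k" for k using qk[of k] by (simp add: n_def)
    have sh: "- (int (n k) * e) = \<sigma> * Lf (K k)" for k
    proof -
      have "int (n k) = q k" using qk[of k] by (simp add: n_def)
      moreover have "e = (if e > 0 then \<bar>e\<bar> else - \<bar>e\<bar>)" by simp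
      ultimately show ?thesis using qe[of k] by (auto simp: \<sigma>_def algebra_simps)
    qed
    have s1: "\<sigma> \<in> {1, -1}" by (simp add: \<sigma>_def)
    have "limitin (chabauty (free_group d)) (\<lambda>k. conj_sub (free_group d) (g [^]\<^bsub>free_group d\<^esub> n k) (Dset Sset d 0)) (Dset Sset d 0) sequentially"
    proof (rule chab_lim[OF fg_ne D_Sub])
      show "conj_sub (free_group d) (g [^]\<^bsub>free_group d\<^esub> n k) (Dset Sset d 0) \<in> Sub (free_group d)" for k
        by (simp add: cp D_Sub)
    next
      fix x assume x: "x \<in> carrier (free_group d)"
      show "eventually (\<lambda>k. x \<in> conj_sub (free_group d) (g [^]\<^bsub>free_group d\<^esub> n k) (Dset Sset d 0) \<longleftrightarrow> x \<in> Dset Sset d 0) sequentially"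
      proof (rule eventually_sequentiallyI[of "Suc (4 * length x)"])
        fix k assume k: "Suc (4 * length x) \<le> k"
        have "\<forall>c\<in>lvs x. c \<in> Sset \<longleftrightarrow> \<sigma> * Lf (K k) + c \<in> Sset"
        proof
          fix c assume c: "c \<in> lvs x"
          have "\<bar>c\<bar> \<le> int (length x)" by (rule lvs_bound[OF c])
          moreover have "int (K k) \<le> Lf (K k)" by (rule Lf_ge)
          moreover have "int k \<le> int (K k)" by (simp add: K_def)
          ultimately have "4 * \<bar>c\<bar> < 3 * Lf (K k)" using k by linarith
          then have "c \<in> Sset \<longleftrightarrow> c + \<sigma> * Lf (K k) \<in> Sset" by (rule rec_Sset[OF _ s1])
          then show "c \<in> Sset \<longleftrightarrow> \<sigma> * Lf (K k) + c \<in> Sset" by (simp add: add.commute)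
        qed
        then have "x \<in> Dset Sset d 0 \<longleftrightarrow> x \<in> Dset Sset d (\<sigma> * Lf (K k))" by (rule D_shift)
        then show "x \<in> conj_sub (free_group d) (g [^]\<^bsub>free_group d\<^esub> n k) (Dset Sset d 0) \<longleftrightarrow> x \<in> Dset Sset d 0"
          by (simp add: cp sh)
      qed
    qed
    moreover have "filterlim n at_top sequentially"
      unfolding filterlim_at_top
    proof
      fix Z
      show "eventually (\<lambda>k. Z \<le> n k) sequentially"
        by (rule eventually_sequentiallyI[of Z]) (use nk le_trans in blast)
    qed
    ultimately show ?thesis by blast
  qed
qed

lemma boomerang_D: "boomerang (free_group d) (Dset Sset d 0)"
  unfolding boomerang_def using D_subgroup boom by blast

lemma D_nontriv:
  assumes "2 \<le> d"
  shows "Dset Sset d 0 \<noteq> {\<one>\<^bsub>free_group d\<^esub>}"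
proof -
  have c: "[(1, True)] \<in> carrier (free_group d)" using assms by (simp add: carrier_fg reduced_Cons)
  have "dl Sset 0 [(1, True)] = []" using zero_in_Sset by simp
  then have "[(1, True)] \<in> Dset Sset d 0" using c by (simp add: Dset_def)
  then show ?thesis by (auto simp: one_fg)
qed

lemma ennreal_const_suminf:
  assumes "suminf (\<lambda>n. (p::ennreal)) \<le> 1"
  shows "p = 0"
proof (rule ccontr)
  assume p0: "p \<noteq> 0"
  have le: "of_nat N * p \<le> 1" for N
  proof -
    have "(\<Sum>n<N. p) \<le> suminf (\<lambda>n. p)" by (rule sum_le_suminf) auto
    then show ?thesis using assms by simp
  qed
  have "p \<le> 1" using le[of 1] by simp
  then obtain r where r: "p = ennreal r" "0 \<le> r" by (cases p) (auto simp: top_unique)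
  have rp: "0 < r" using r p0 by auto
  obtain N where N: "1 < of_nat N * r" using ex_less_of_nat_mult[OF rp] by blast
  have "ennreal (of_nat N * r) \<le> 1" using le[of N] r by (simp add: ennreal_mult ennreal_of_nat_eq_real_of_nat)
  then have "of_nat N * r \<le> 1" by (simp add: ennreal_le_iff2 r)
  then show False using N by simp
qed

definition gn :: "nat \<Rightarrow> nat \<Rightarrow> letter list" where
  "gn n0 n = replicate (nat (3 * Lf (n + n0))) (0, True)"

lemma reduced_rep: "reduced (replicate m ((0::nat), True))"
proof (induction m)
  case 0 then show ?case by simp
next
  case (Suc m)
  have "\<forall>y ys. replicate m ((0::nat), True) = y # ys \<longrightarrow> y \<noteq> flipl (0, True)"
  proof (intro allI impI)
    fix y ys assume "replicate m ((0::nat), True) = y # ys"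
    then have "y = (0, True)" by (metis Cons_replicate_eq)
    then show "y \<noteq> flipl (0, True)" by (simp add: flipl_def)
  qed
  then show ?case using Suc by (simp add: reduced_Cons)
qed

lemma gn_carrier: "0 < d \<Longrightarrow> gn n0 n \<in> carrier (free_group d)"
  by (simp add: gn_def carrier_fg reduced_rep)

lemma lev_rep: "lev (replicate m ((0::nat), True)) = int m"
  by (induction m) (auto simp: levl_def)

lemma lev_gn: "lev (gn n0 n) = 3 * Lf (n + n0)"
  using Lf_pos[of "n + n0"] by (simp add: gn_def lev_rep)

lemma sep2:
  assumes nn: "n' < n" and x: "p + 3 * Lf (n + n0) + c \<in> Sset" and x': "p + 3 * Lf (n' + n0) + c' \<in> Sset"
    and c: "\<bar>c\<bar> \<le> int L" and c': "\<bar>c'\<bar> \<le> int L" and n0: "n0 = 24 * L"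
  shows False
proof -
  have "\<bar>c - c'\<bar> \<le> \<bar>c\<bar> + \<bar>c'\<bar>" by (rule abs_triangle_ineq4)
  moreover have "int (n + n0) = int n + 24 * int L" using n0 by simp
  moreover have "0 \<le> int n" by simp
  ultimately have d1: "12 * \<bar>c - c'\<bar> \<le> int (n + n0)" using c c' by (smt (verit))
  have d: "12 * \<bar>c - c'\<bar> \<le> Lf (n + n0)" using d1 Lf_ge[of "n + n0"] by linarith
  have "(p + 3 * Lf (n + n0) + c) - (p + 3 * Lf (n' + n0) + c') \<noteq> 3 * (Lf (n + n0) - Lf (n' + n0)) + (c - c')"
    by (rule sep_Sset[OF _ x x' d]) (use nn in simp)
  then show False by (simp add: algebra_simps)
qed

lemma two_conj:
  assumes d: "0 < d" and w: "w \<in> carrier (free_group d)" "w \<noteq> []" and n0: "n0 = 24 * length w"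
    and nn: "n \<noteq> n'"
    and m1: "gn n0 n \<otimes>\<^bsub>free_group d\<^esub> w \<otimes>\<^bsub>free_group d\<^esub> inv\<^bsub>free_group d\<^esub> gn n0 n \<in> Dset Sset d p"
    and m2: "gn n0 n' \<otimes>\<^bsub>free_group d\<^esub> w \<otimes>\<^bsub>free_group d\<^esub> inv\<^bsub>free_group d\<^esub> gn n0 n' \<in> Dset Sset d p"
  shows False
proof -
  have a1: "w \<in> Dset Sset d (p + 3 * Lf (n + n0))"
    using mem_shift[OF gn_carrier[OF d] w(1) m1] by (simp add: lev_gn)
  have a2: "w \<in> Dset Sset d (p + 3 * Lf (n' + n0))"
    using mem_shift[OF gn_carrier[OF d] w(1) m2] by (simp add: lev_gn)
  obtain c where c: "c \<in> lvs w" "p + 3 * Lf (n + n0) + c \<in> Sset" using D_hit[OF w a1] by blast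
  obtain c' where c': "c' \<in> lvs w" "p + 3 * Lf (n' + n0) + c' \<in> Sset" using D_hit[OF w a2] by blast
  have b: "\<bar>c\<bar> \<le> int (length w)" "\<bar>c'\<bar> \<le> int (length w)" using lvs_bound c(1) c'(1) by auto
  show False
  proof (cases "n' < n")
    case True
    show False by (rule sep2[OF True c(2) c'(2) b n0])
  next
    case False
    then have "n < n'" using nn by simp
    then show False using sep2[OF _ c'(2) c(2) b(2) b(1) n0] by blast
  qed
qed

lemma null_E:
  assumes d: "0 < d" and irs: "IRS (free_group d) M"
    and X1: "emeasure M ((chabauty (free_group d)) closure_of (conj_class (free_group d) (Dset Sset d 0))) = 1"
    and w: "w \<in> carrier (free_group d)" "w \<noteq> []"
  shows "emeasure M {H \<in> Sub (free_group d). w \<in> H} = 0"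
proof -
  define n0 where "n0 = 24 * length w"
  define g where "g n = gn n0 n" for n
  define wn where "wn n = g n \<otimes>\<^bsub>free_group d\<^esub> w \<otimes>\<^bsub>free_group d\<^esub> inv\<^bsub>free_group d\<^esub> (g n)" for n
  define E where "E x = {H \<in> Sub (free_group d). x \<in> H}" for x
  define Xc where "Xc = chabauty (free_group d) closure_of conj_class (free_group d) (Dset Sset d 0)"
  define F where "F = {H \<in> Sub (free_group d). \<forall>n n'. n \<noteq> n' \<longrightarrow> \<not> (wn n \<in> H \<and> wn n' \<in> H)}"
  have ps: "prob_space M" and sM: "sets M = sets (chabauty_borel (free_group d))"
    and inv: "\<forall>x\<in>carrier (free_group d). distr M M (conj_sub (free_group d) x) = M"
    using irs by (auto simp: IRS_def)
  have spM: "space M = Sub (free_group d)"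
    using sets_eq_imp_space_eq[OF sM] space_cb[OF fg_ne] by simp
  have gc: "g n \<in> carrier (free_group d)" for n using gn_carrier[OF d] by (simp add: g_def)
  have wnc: "wn n \<in> carrier (free_group d)" for n
    unfolding wn_def using gc w(1) by (meson group.inv_closed group_fg monoid.m_closed group.is_monoid)
  have Eo: "openin (chabauty (free_group d)) (E x)" if "x \<in> carrier (free_group d)" for x
    using openin_mem[OF that] by (simp add: E_def)
  have Es: "E x \<in> sets M" if "x \<in> carrier (free_group d)" for x
    using open_sets_cb[OF fg_ne Eo[OF that]] sM by simp
  have Fcl: "closedin (chabauty (free_group d)) F"
  proof -
    have e: "topspace (chabauty (free_group d)) - F = \<Union> ((\<lambda>p. E (wn (fst p)) \<inter> E (wn (snd p))) ` {p. fst p \<noteq> snd p})"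
    proof (rule Set.set_eqI)
      fix H
      show "H \<in> topspace (chabauty (free_group d)) - F \<longleftrightarrow> H \<in> \<Union> ((\<lambda>p. E (wn (fst p)) \<inter> E (wn (snd p))) ` {p. fst p \<noteq> snd p})"
      proof
        assume "H \<in> topspace (chabauty (free_group d)) - F"
        then have H: "H \<in> Sub (free_group d)" "\<exists>n n'. n \<noteq> n' \<and> wn n \<in> H \<and> wn n' \<in> H"
          unfolding topspace_chab[OF fg_ne] F_def by auto
        then obtain n n' where "n \<noteq> n'" "wn n \<in> H" "wn n' \<in> H" by blast
        then have "H \<in> E (wn (fst (n, n'))) \<inter> E (wn (snd (n, n')))" using H(1) by (simp add: E_def)
        moreover have "(n, n') \<in> {p. fst p \<noteq> snd p}" using \<open>n \<noteq> n'\<close> by simp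
        ultimately show "H \<in> \<Union> ((\<lambda>p. E (wn (fst p)) \<inter> E (wn (snd p))) ` {p. fst p \<noteq> snd p})" by blast
      next
        assume "H \<in> \<Union> ((\<lambda>p. E (wn (fst p)) \<inter> E (wn (snd p))) ` {p. fst p \<noteq> snd p})"
        then obtain p where p: "fst p \<noteq> snd p" "H \<in> E (wn (fst p))" "H \<in> E (wn (snd p))" by blast
        then have "H \<in> Sub (free_group d)" "H \<notin> F" unfolding E_def F_def by auto
        then show "H \<in> topspace (chabauty (free_group d)) - F" unfolding topspace_chab[OF fg_ne] by simp
      qed
    qed
    have o: "openin (chabauty (free_group d)) (\<Union> ((\<lambda>p. E (wn (fst p)) \<inter> E (wn (snd p))) ` {p. fst p \<noteq> snd p}))"
    proof (rule openin_Union)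
      fix S assume "S \<in> (\<lambda>p. E (wn (fst p)) \<inter> E (wn (snd p))) ` {p. fst p \<noteq> snd p}"
      then obtain p where "S = E (wn (fst p)) \<inter> E (wn (snd p))" by blast
      then show "openin (chabauty (free_group d)) S" using Eo[OF wnc] by (simp add: openin_Int)
    qed
    have "F \<subseteq> topspace (chabauty (free_group d))" unfolding topspace_chab[OF fg_ne] F_def by auto
    then show ?thesis unfolding closedin_def using e o by simp
  qed
  have CF: "conj_class (free_group d) (Dset Sset d 0) \<subseteq> F"
  proof
    fix H assume "H \<in> conj_class (free_group d) (Dset Sset d 0)"
    then obtain x where x: "x \<in> carrier (free_group d)" "H = conj_sub (free_group d) x (Dset Sset d 0)"
      unfolding conj_class_def by blast
    then have H: "H = Dset Sset d (0 - lev x)" using conj_D by simp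
    have "\<forall>n n'. n \<noteq> n' \<longrightarrow> \<not> (wn n \<in> H \<and> wn n' \<in> H)"
    proof (intro allI impI notI)
      fix n n' assume nn: "n \<noteq> n'" and m: "wn n \<in> H \<and> wn n' \<in> H"
      then have m1: "wn n \<in> Dset Sset d (- lev x)" and m2: "wn n' \<in> Dset Sset d (- lev x)" using H by simp_all
      show False by (rule two_conj[OF d w n0_def nn m1[unfolded wn_def g_def] m2[unfolded wn_def g_def]])
    qed
    then show "H \<in> F" unfolding F_def using H D_Sub by simp
  qed
  have XF: "Xc \<subseteq> F" unfolding Xc_def by (rule closure_of_minimal[OF CF Fcl])
  have XS: "Xc \<subseteq> Sub (free_group d)"
    unfolding Xc_def using closure_of_subset_topspace topspace_chab[OF fg_ne] by metis
  have Xs: "Xc \<in> sets M"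
  proof (rule ccontr)
    assume "Xc \<notin> sets M"
    then have "emeasure M Xc = 0" by (rule emeasure_notin_sets)
    then show False using X1 by (simp add: Xc_def)
  qed
  have AEX: "AE H in M. H \<in> Xc"
  proof (rule prob_space.AE_I_eq_1[OF ps])
    have "{x \<in> space M. x \<in> Xc} = Xc" using XS spM by blast
    then show "emeasure M {x \<in> space M. x \<in> Xc} = 1" "{x \<in> space M. x \<in> Xc} \<in> sets M"
      using X1 Xs by (simp_all add: Xc_def)
  qed
  have meas: "conj_sub (free_group d) x \<in> measurable M M" if "x \<in> carrier (free_group d)" for x
    using meas_conj[OF group_fg that] measurable_cong_sets[OF sM sM] by simp
  have inv_eq: "emeasure M (E (wn n)) = emeasure M (E w)" for n
  proof -
    have "emeasure M (E (wn n)) = emeasure (distr M M (conj_sub (free_group d) (g n))) (E (wn n))"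
      using inv gc by simp
    also have "\<dots> = emeasure M (conj_sub (free_group d) (g n) -` E (wn n) \<inter> space M)"
      by (rule emeasure_distr[OF meas[OF gc] Es[OF wnc]])
    also have "conj_sub (free_group d) (g n) -` E (wn n) \<inter> space M = E w"
    proof (rule Set.set_eqI)
      fix H
      show "H \<in> conj_sub (free_group d) (g n) -` E (wn n) \<inter> space M \<longleftrightarrow> H \<in> E w"
      proof (cases "H \<in> Sub (free_group d)")
        case True
        then have sub: "H \<subseteq> carrier (free_group d)" by (simp add: Sub_def subgroup.subset)
        have cs: "conj_sub (free_group d) (g n) H \<in> Sub (free_group d)"
          using True group.conj_sub_subgroup[OF group_fg _ gc] by (simp add: Sub_def)
        have "wn n \<in> conj_sub (free_group d) (g n) H \<longleftrightarrow>
            inv\<^bsub>free_group d\<^esub> (g n) \<otimes>\<^bsub>free_group d\<^esub> wn n \<otimes>\<^bsub>free_group d\<^esub> g n \<in> H"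
          by (rule group.conj_sub_mem_iff[OF group_fg sub gc wnc])
        also have "inv\<^bsub>free_group d\<^esub> (g n) \<otimes>\<^bsub>free_group d\<^esub> wn n \<otimes>\<^bsub>free_group d\<^esub> g n = w"
          unfolding wn_def by (rule group.conj_cancel1[OF group_fg gc w(1)])
        finally show ?thesis using True cs spM by (simp add: E_def)
      next
        case False then show ?thesis using spM by (simp add: E_def)
      qed
    qed
    finally show ?thesis .
  qed
  define A where "A n = E (wn n) \<inter> Xc" for n
  have As: "A n \<in> sets M" for n using Es[OF wnc] Xs by (simp add: A_def)
  have Aeq: "emeasure M (A n) = emeasure M (E w)" for n
  proof -
    have "AE H in M. H \<in> A n \<longleftrightarrow> H \<in> E (wn n)"
      using AEX by (rule eventually_mono) (simp add: A_def)
    then have "emeasure M (A n) = emeasure M (E (wn n))"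
      by (rule emeasure_eq_AE[OF _ As Es[OF wnc]])
    then show ?thesis using inv_eq by simp
  qed
  have disj: "disjoint_family A"
    unfolding disjoint_family_on_def
  proof (intro ballI impI)
    fix m n :: nat assume "m \<noteq> n"
    show "A m \<inter> A n = {}"
    proof (rule ccontr)
      assume "A m \<inter> A n \<noteq> {}"
      then obtain H where "H \<in> A m" "H \<in> A n" by blast
      then have "H \<in> F" "wn m \<in> H" "wn n \<in> H" using XF by (auto simp: A_def E_def)
      then show False using \<open>m \<noteq> n\<close> unfolding F_def by blast
    qed
  qed
  have "suminf (\<lambda>n. emeasure M (A n)) = emeasure M (\<Union>n. A n)"
    by (rule suminf_emeasure) (use As disj in auto)
  also have "\<dots> \<le> 1" by (rule prob_space.measure_le_1[OF ps])
  finally have "suminf (\<lambda>n. emeasure M (E w)) \<le> 1" using Aeq by simp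
  then have "emeasure M (E w) = 0" by (rule ennreal_const_suminf)
  then show ?thesis by (simp add: E_def)
qed

lemma irs_main:
  assumes d: "0 < d" and irs: "IRS (free_group d) M"
    and X1: "emeasure M ((chabauty (free_group d)) closure_of (conj_class (free_group d) (Dset Sset d 0))) = 1"
  shows "M = return (chabauty_borel (free_group d)) {\<one>\<^bsub>free_group d\<^esub>}"
proof -
  have ps: "prob_space M" and sM: "sets M = sets (chabauty_borel (free_group d))"
    using irs by (auto simp: IRS_def)
  have spM: "space M = Sub (free_group d)"
    using sets_eq_imp_space_eq[OF sM] space_cb[OF fg_ne] by simp
  have AEw: "AE H in M. \<forall>w. w \<in> carrier (free_group d) \<and> w \<noteq> [] \<longrightarrow> w \<notin> H"
    unfolding AE_all_countable
  proof
    fix w :: "letter list"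
    show "AE H in M. w \<in> carrier (free_group d) \<and> w \<noteq> [] \<longrightarrow> w \<notin> H"
    proof (cases "w \<in> carrier (free_group d) \<and> w \<noteq> []")
      case True
      have z: "emeasure M {H \<in> Sub (free_group d). w \<in> H} = 0"
        using null_E[OF d irs X1] True by blast
      have s: "{H \<in> Sub (free_group d). w \<in> H} \<in> sets M"
        using open_sets_cb[OF fg_ne openin_mem] True sM by simp
      have N: "{H \<in> Sub (free_group d). w \<in> H} \<in> null_sets M"
        using z s by (simp add: null_sets_def)
      show ?thesis by (rule AE_I'[OF N]) (auto simp: spM)
    next
      case False then show ?thesis by (intro AE_I2) auto
    qed
  qed
  have "AE H in M. H \<in> space M \<and> (\<forall>w. w \<in> carrier (free_group d) \<and> w \<noteq> [] \<longrightarrow> w \<notin> H)"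
    using AE_space[of M] AEw by (rule eventually_conj)
  then have AE1: "AE H in M. H = {[]}"
  proof (rule eventually_mono)
    fix H assume Ha: "H \<in> space M \<and> (\<forall>w. w \<in> carrier (free_group d) \<and> w \<noteq> [] \<longrightarrow> w \<notin> H)"
    then have H: "H \<in> space M" and a: "\<forall>w. w \<in> carrier (free_group d) \<and> w \<noteq> [] \<longrightarrow> w \<notin> H" by auto
    have sg: "subgroup H (free_group d)" using H spM by (simp add: Sub_def)
    have "[] \<in> H" using subgroup.one_closed[OF sg] by (simp add: one_fg)
    moreover have "x \<in> H \<Longrightarrow> x = []" for x using a subgroup.subset[OF sg] by blast
    ultimately show "H = {[]}" by blast
  qed
  show ?thesis
  proof (rule measure_eqI)
    show "sets M = sets (return (chabauty_borel (free_group d)) {\<one>\<^bsub>free_group d\<^esub>})"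
      using sM by simp
  next
    fix A assume A: "A \<in> sets M"
    have A': "A \<in> sets (chabauty_borel (free_group d))" using A sM by simp
    show "emeasure M A = emeasure (return (chabauty_borel (free_group d)) {\<one>\<^bsub>free_group d\<^esub>}) A"
    proof (cases "{[]} \<in> A")
      case True
      have "AE H in M. H \<in> A" using AE1 by (rule eventually_mono) (use True in simp)
      then have "emeasure M A = 1" by (rule prob_space.emeasure_eq_1_AE[OF ps A])
      then show ?thesis using A' True by (simp add: one_fg)
    next
      case False
      have "AE H in M. H \<in> A \<longleftrightarrow> H \<in> {}" using AE1 by (rule eventually_mono) (use False in simp)
      then have "emeasure M A = emeasure M {}" by (rule emeasure_eq_AE[OF _ A]) simp
      then show ?thesis using A' False by (simp add: one_fg)
    qed
  qed
qed

theorem corollary1p5: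
  fixes d :: nat
  assumes "d \<ge> 2"
  shows "\<exists>\<Delta>. boomerang (free_group d) \<Delta> \<and> \<Delta> \<noteq> {\<one>\<^bsub>free_group d\<^esub>} \<and>
           (\<forall>M. IRS (free_group d) M \<and>
                 emeasure M ((chabauty (free_group d)) closure_of (conj_class (free_group d) \<Delta>)) = 1
               \<longrightarrow> M = return (chabauty_borel (free_group d)) {\<one>\<^bsub>free_group d\<^esub>})"
proof (intro exI conjI allI impI)
  show "boomerang (free_group d) (Dset Sset d 0)" by (rule boomerang_D)
  show "Dset Sset d 0 \<noteq> {\<one>\<^bsub>free_group d\<^esub>}" by (rule D_nontriv[OF assms])
  fix M assume "IRS (free_group d) M \<and>
       emeasure M ((chabauty (free_group d)) closure_of (conj_class (free_group d) (Dset Sset d 0))) = 1"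
  then show "M = return (chabauty_borel (free_group d)) {\<one>\<^bsub>free_group d\<^esub>}"
    using irs_main[of d M] assms by simp
qed

end
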